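(* $$c_{2r}(1,\beta,0)=\frac{1}{2^{2r}(2r)!}\prod_{i=1}^r\big(1-(2i-1)^2\beta\big).$$
   Context: Fix an integer $r\ge1$ and indeterminates $\alpha,\beta,\gamma$. Define polynomials $c_n=c_n(\alpha,\beta,\gamma)\in\mathbb{Q}[\alpha,\beta,\gamma]$ by $c_n=0$ for $n<0$, $c_0=1$, and for every integer $n\ge-3$, $$(n+4)c_{n+4}+(2n+6-r)\alpha c_{n+3}+\left[(n+2-r)\alpha^2+(2n+5-2r)\frac{\alpha^2-\beta}{4}\right]c_{n+2}+\left[(2n+3-3r)\alpha\frac{\alpha^2-\beta}{4}+\frac{\gamma}{2}\right]c_{n+1}+\frac{1}{16}(\alpha^2-\beta)^2(n+1-2r)c_n=0.$$ $c_{2r}(1,\beta,0)\in\mathbb{Q}[\beta]$ denotes $c_{2r}$ with $\alpha=1$, $\gamma=0$. *)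

theory Defs
  imports Complex_Main
begin

text \<open>The polynomials c_n(alpha,beta,gamma) in Q[alpha,beta,gamma], represented by their
  evaluation at rational points.  cseq r a b g m = c_m(a,b,g).  The recurrence with
  index n+4 = Suc k (so n = k - 3, valid for all n >= -3) is solved for c_{n+4};
  terms with negative index are 0.\<close>

fun cseq :: "nat \<Rightarrow> rat \<Rightarrow> rat \<Rightarrow> rat \<Rightarrow> nat \<Rightarrow> rat" where
  "cseq r a b g 0 = 1"
| "cseq r a b g (Suc k) =
    (let n = (of_nat k :: rat) - 3; R = (of_nat r :: rat); d = (a^2 - b) / 4 in
     - ( (2*n + 6 - R) * a * cseq r a b g k
       + (if 1 \<le> k then ((n + 2 - R) * a^2 + (2*n + 5 - 2*R) * d) * cseq r a b g (k - 1) else 0)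
       + (if 2 \<le> k then ((2*n + 3 - 3*R) * a * d + g / 2) * cseq r a b g (k - 2) else 0)
       + (if 3 \<le> k then (1/16) * (a^2 - b)^2 * (n + 1 - 2*R) * cseq r a b g (k - 3) else 0)
       ) / (n + 4))"

end

theory Submission imports Defs "HOL-Computational_Algebra.Polynomial" begin

lemma cseq_rec:
  fixes r m :: nat and b :: rat
  defines "c \<equiv> cseq r 1 b 0" and "d \<equiv> (1 - b)/4" and "R \<equiv> (of_nat r :: rat)"
  shows "(of_nat m + 4) * c (m+4) + (2*of_nat m + 6 - R) * c (m+3)
     + ((of_nat m + 2 - R) + (2*of_nat m + 5 - 2*R) * d) * c (m+2)
     + ((2*of_nat m + 3 - 3*R) * d) * c (m+1) + d^2 * (of_nat m + 1 - 2*R) * c m = 0"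
proof -
  have h: "1 \<le> m+3" "2 \<le> m+3" "3 \<le> m+3" "m+3-1 = m+2" "m+3-2 = m+1" "m+3-3=m" "m+4 = Suc (m+3)" by auto
  have e: "c (m+4) = - ( (2*(of_nat (m+3) - 3) + 6 - R) * 1 * c (m+3)
       + (((of_nat (m+3) - 3) + 2 - R) * 1^2 + (2*(of_nat (m+3) - 3) + 5 - 2*R) * ((1^2 - b)/4)) * c (m+2)
       + ((2*(of_nat (m+3) - 3) + 3 - 3*R) * 1 * ((1^2 - b)/4) + 0/2) * c (m+1)
       + (1/16) * (1^2 - b)^2 * ((of_nat (m+3) - 3) + 1 - 2*R) * c m) / ((of_nat (m+3) - 3) + 4)"
    unfolding c_def R_def h(7)
    apply (subst cseq.simps(2))
    apply (simp only: Let_def h if_True)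
    done
  have n: "(of_nat (m+3) - 3 :: rat) = of_nat m" by simp
  have pos: "(of_nat m + 4::rat) \<noteq> 0" by (metis add_nonneg_pos of_nat_0_le_iff zero_less_numeral less_irrefl)
  show ?thesis using e pos unfolding d_def n by (simp del: cseq.simps add: field_simps power2_eq_square)
qed

lemma cseq_small:
  fixes r :: nat and b :: rat
  defines "c \<equiv> cseq r 1 b 0" and "d \<equiv> (1 - b)/4" and "R \<equiv> (of_nat r :: rat)"
  shows "c 0 = 1" "c 1 = R"
    "2 * c 2 + (2-R) * c 1 + (-R + (1-2*R)*d) = 0"
    "3 * c 3 + (4-R) * c 2 + ((1-R)+(3-2*R)*d) * c 1 + (1-3*R)*d = 0"
proof -
  show c0: "c 0 = 1" unfolding c_def by simp
  show c1: "c 1 = R" unfolding c_def R_def by (simp add: Let_def)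
  have "c 2 = - ((2 * (1 - 3) + 6 - R) * c 1 + ((1 - 3 + 2 - R) + (2 * (1 - 3) + 5 - 2 * R) * d) * c 0) / (1 - 3 + 4)"
    unfolding c_def R_def d_def numeral_2_eq_2 by (simp add: Let_def del: cseq.simps) (simp add: Let_def)
  then show "2 * c 2 + (2-R) * c 1 + (-R + (1-2*R)*d) = 0" using c1 c0
    unfolding c_def by (simp add: field_simps del: cseq.simps)
  have "c 3 = - ((2 * (2 - 3) + 6 - R) * c 2 + ((2 - 3 + 2 - R) + (2 * (2 - 3) + 5 - 2 * R) * d) * c 1
      + ((2*(2-3) + 3 - 3*R) * d) * c 0) / (2 - 3 + 4)"
    unfolding c_def R_def d_def numeral_3_eq_3
    apply (subst cseq.simps(2))
    by (simp add: Let_def numeral_2_eq_2 del: cseq.simps)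
  then show "3 * c 3 + (4-R) * c 2 + ((1-R)+(3-2*R)*d) * c 1 + (1-3*R)*d = 0" using c1 c0
    unfolding c_def by (simp add: field_simps del: cseq.simps)
qed

lemma cseq_short:
  fixes r j :: nat and b :: rat
  defines "c \<equiv> cseq r 1 b 0" and "d \<equiv> (1 - b)/4" and "R \<equiv> (of_nat r :: rat)"
  shows "(of_nat j + 2) * c (j+2) = (R - of_nat j - 1) * c (j+1) + d * (2*R - of_nat j - 1) * c j"
proof -
  define S where "S j = (of_nat j + 2) * c (j+2) - (R - of_nat j - 1) * c (j+1) - d * (2*R - of_nat j - 1) * c j" for j
  note sm = cseq_small[of r b, folded c_def d_def R_def]
  have "S j = 0" for j
  proof (induction j rule: less_induct)
    case (less j)
    show ?case
    proof (cases j)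
      case 0
      then show ?thesis using sm unfolding S_def by (simp add: algebra_simps numeral_2_eq_2 numeral_3_eq_3)
    next
      case (Suc k)
      show ?thesis
      proof (cases k)
        case 0
        have "S 0 = 0" using less Suc by simp
        then show ?thesis using sm Suc 0 unfolding S_def by (simp add: algebra_simps numeral_2_eq_2 numeral_3_eq_3)
      next
        case (Suc m)
        have "S (m+1) = 0" "S m = 0" using less \<open>j = Suc k\<close> Suc by auto
        moreover have "S (m+2) + S (m+1) + d * S m = 0"
          using cseq_rec[of m r b, folded c_def d_def R_def] unfolding S_def
          by (simp add: algebra_simps power2_eq_square numeral_eq_Suc)
        ultimately show ?thesis using \<open>j = Suc k\<close> Suc by (simp add: numeral_eq_Suc)
      qed
    qed
  qed
  then show ?thesis unfolding S_def by (simp add: algebra_simps numeral_2_eq_2 numeral_3_eq_3)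
qed

fun cp :: "nat \<Rightarrow> nat \<Rightarrow> rat poly" where
  "cp r 0 = 1"
| "cp r (Suc 0) = [:of_nat r:]"
| "cp r (Suc (Suc n)) = smult (1 / (of_nat n + 2))
     (smult (of_nat r - of_nat n - 1) (cp r (Suc n)) + smult (2 * of_nat r - of_nat n - 1) (pCons 0 (cp r n)))"

lemma seq_eq_cp:
  fixes f :: "nat \<Rightarrow> rat" and r :: nat and d :: rat
  assumes f0: "f 0 = 1" and f1: "f 1 = of_nat r"
    and fr: "\<And>j. (of_nat j + 2) * f (j+2) = (of_nat r - of_nat j - 1) * f (j+1) + d * (2*of_nat r - of_nat j - 1) * f j"
  shows "f n = poly (cp r n) d"
proof -
  have pos: "(of_nat n + 2 :: rat) \<noteq> 0" for n by (metis add_nonneg_pos of_nat_0_le_iff zero_less_numeral less_irrefl)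
  have "f n = poly (cp r n) d \<and> f (Suc n) = poly (cp r (Suc n)) d" for n
  proof (induction n)
    case 0 then show ?case using f0 f1 by simp
  next
    case (Suc n)
    have "f (Suc (Suc n)) = ((of_nat r - of_nat n - 1) * f (n+1) + d * (2*of_nat r - of_nat n - 1) * f n) / (of_nat n + 2)"
      using fr[of n] pos[of n] by (simp add: field_simps numeral_2_eq_2)
    then show ?case using Suc by (simp add: field_simps)
  qed
  then show ?thesis by simp
qed

lemma cp_coeff_zero: "n < 2*j \<Longrightarrow> coeff (cp r n) j = 0"
proof (induction n arbitrary: j rule: less_induct)
  case (less n)
  show ?case
  proof (cases n)
    case 0 then show ?thesis using less.prems by (simp add: coeff_1)
  next
    case (Suc k)
    show ?thesis
    proof (cases k)
      case 0 then show ?thesis using less.prems Suc by (cases j) auto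
    next
      case (Suc k')
      obtain j' where j: "j = Suc j'" using less.prems by (cases j) auto
      have "coeff (cp r (Suc k')) j = 0" using less Suc \<open>n = Suc k\<close> by auto
      moreover have "coeff (cp r k') j' = 0" using less Suc \<open>n = Suc k\<close> j by auto
      ultimately show ?thesis using Suc \<open>n = Suc k\<close> j by simp
    qed
  qed
qed

lemma cp_coeff_top: "coeff (cp r (2*m)) m = (\<Prod>k=1..m. (2*of_nat r - 2*of_nat k + 1)/(2*of_nat k))"
proof (induction m)
  case 0 then show ?case by simp
next
  case (Suc m)
  have e: "2 * Suc m = Suc (Suc (2*m))" by simp
  have z: "coeff (cp r (Suc (2*m))) (Suc m) = 0" by (rule cp_coeff_zero) simp
  show ?case unfolding e using Suc z
    by (simp add: prod.nat_ivl_Suc' field_simps)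
qed

lemma pow_deriv: "p * pderiv (p^n) = smult (of_nat n) (p^n * pderiv p)"
proof (cases n)
  case 0 then show ?thesis by simp
next
  case (Suc k) then show ?thesis by (simp add: pderiv_power_Suc del: power_Suc) (simp add: algebra_simps)
qed

lemma ode_poly:
  fixes u v d R :: rat and A B :: nat
  assumes "u + v = 1" "u * v = d" "of_nat A * u + of_nat B * v = R" "of_nat A + of_nat B = 2*R - 1"
  shows "[:1,1,d:] * pderiv ([:1,u:]^A * [:1,v:]^B) = [:R, (2*R-1)*d:] * ([:1,u:]^A * [:1,v:]^B)"
proof -
  define F where "F = [:1,u:]^A"
  define G where "G = [:1,v:]^B"
  have q: "[:1,1,d:] = [:1,u:] * [:1,v:]" using assms by (simp add: mult.commute)
  have "[:1,1,d:] * pderiv (F * G) = [:1,u:] * F * ([:1,v:] * pderiv G) + [:1,v:] * G * ([:1,u:] * pderiv F)"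
    by (simp only: q pderiv_mult distrib_left mult_ac add_ac)
  also have "\<dots> = F * G * (smult (of_nat A) ([:1,v:] * [:u:]) + smult (of_nat B) ([:1,u:] * [:v:]))"
    unfolding F_def G_def pow_deriv by (simp add: algebra_simps pderiv_pCons smult_add_left)
  also have "smult (of_nat A) ([:1,v:] * [:u:]) + smult (of_nat B) ([:1,u:] * [:v:]) = [:R, (2*R-1)*d:]"
  proof -
    have h4: "d * of_nat A + d * of_nat B = d * (2*R-1)" using assms(4) by (metis distrib_left)
    show ?thesis using assms h4 by (simp add: algebra_simps)
  qed
  finally show ?thesis unfolding F_def G_def by (simp add: algebra_simps)
qed

lemma ode_coeff:
  fixes P :: "rat poly" and d :: rat and r :: nat
  assumes P0: "coeff P 0 = 1" and ode: "[:1,1,d:] * pderiv P = [:of_nat r, (2*of_nat r-1)*d:] * P"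
  shows "coeff P n = poly (cp r n) d"
proof (rule seq_eq_cp[where f = "coeff P"])
  have c: "coeff ([:1,1,d:] * pderiv P) n = coeff ([:of_nat r, (2*of_nat r-1)*d:] * P) n" for n
    using ode by simp
  show "coeff P 0 = 1" by (rule P0)
  show "coeff P 1 = of_nat r" using c[of 0] P0 by (simp add: coeff_pderiv)
  show "(of_nat j + 2) * coeff P (j+2) = (of_nat r - of_nat j - 1) * coeff P (j+1) + d * (2*of_nat r - of_nat j - 1) * coeff P j" for j
  proof (cases j)
    case 0
    then show ?thesis using c[of 1] P0 by (simp add: coeff_pderiv algebra_simps numeral_2_eq_2)
  next
    case (Suc k)
    then show ?thesis using c[of "Suc (Suc k)"] by (simp add: coeff_pderiv algebra_simps numeral_2_eq_2)
  qed
qed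

lemma cp_root:
  fixes r i :: nat
  assumes i1: "1 \<le> i" and ir: "i \<le> r"
  shows "poly (cp r (2*r)) ((1 - (1/(2*of_nat i - 1))^2)/4) = 0"
proof -
  define s :: rat where "s = 1/(2*of_nat i - 1)"
  define u where "u = (1+s)/2"
  define v where "v = (1-s)/2"
  define d where "d = (1 - s^2)/4"
  define A where "A = r - 1 + i"
  define B where "B = r - i"
  define P where "P = [:1,u:]^A * [:1,v:]^B"
  have ne: "(2*of_nat i - 1 :: rat) \<noteq> 0"
  proof -
    have "(of_nat i :: rat) \<ge> 1" using i1 by simp
    then show ?thesis by linarith
  qed
  have hs: "s * (2*of_nat i - 1) = 1" unfolding s_def using ne by simp
  have hA: "(of_nat A :: rat) = of_nat r - 1 + of_nat i" unfolding A_def using i1 ir by (simp add: of_nat_diff)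
  have hB: "(of_nat B :: rat) = of_nat r - of_nat i" unfolding B_def using ir by (simp add: of_nat_diff)
  have e1: "u + v = 1" unfolding u_def v_def by (simp add: field_simps)
  have e2: "u * v = d" unfolding u_def v_def d_def by (simp add: field_simps power2_eq_square)
  have e3: "of_nat A * u + of_nat B * v = of_nat r"
  proof -
    have "of_nat A * u + of_nat B * v = (of_nat A + of_nat B)/2 + (s * (2*of_nat i - 1))/2"
      unfolding u_def v_def hA hB by (simp add: field_simps)
    also have "\<dots> = of_nat r" unfolding hs hA hB by (simp add: field_simps)
    finally show ?thesis .
  qed
  have e4: "of_nat A + of_nat B = 2 * (of_nat r :: rat) - 1" unfolding hA hB by simp
  have ode: "[:1,1,d:] * pderiv P = [:of_nat r, (2*of_nat r-1)*d:] * P"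
    unfolding P_def by (rule ode_poly[OF e1 e2 e3 e4])
  have P0: "coeff P 0 = 1" unfolding P_def poly_0_coeff_0[symmetric] by simp
  have "degree P \<le> A + B"
  proof -
    have "degree P \<le> degree ([:1,u:]^A) + degree ([:1,v:]^B)" unfolding P_def by (rule degree_mult_le)
    also have "\<dots> \<le> degree [:1,u:] * A + degree [:1,v:] * B" by (intro add_mono degree_power_le)
    also have "\<dots> \<le> A + B" by (intro add_mono) auto
    finally show ?thesis .
  qed
  then have "degree P < 2*r" unfolding A_def B_def using i1 ir by linarith
  then have "coeff P (2*r) = 0" by (rule coeff_eq_0)
  moreover have "coeff P (2*r) = poly (cp r (2*r)) d" by (rule ode_coeff[OF P0 ode])
  ultimately show ?thesis unfolding d_def s_def by simp
qed

lemma fact_split: "(fact (2*r) :: rat) = (\<Prod>i=1..r. (2*of_nat i - 1)) * (\<Prod>i=1..r. 2*of_nat i)"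
proof (induction r)
  case 0 then show ?case by simp
next
  case (Suc r)
  have e: "2 * Suc r = Suc (Suc (2*r))" by simp
  show ?case unfolding e using Suc by (simp add: prod.nat_ivl_Suc' algebra_simps)
qed

lemma numeric:
  "(\<Prod>k=1..r. (2*of_nat r - 2*of_nat k + 1)/(2*of_nat k) :: rat)
   = 1 / (2^(2*r) * fact (2*r)) * (\<Prod>i=1..r. 4 * (2*of_nat i - 1)^2)"
proof -
  define Od where "Od = (\<Prod>i=1..r. (2*of_nat i - 1 :: rat))"
  define E where "E = (\<Prod>i=1..r. (2*of_nat i :: rat))"
  have rev: "(\<Prod>k=1..r. (2*of_nat r - 2*of_nat k + 1 :: rat)) = Od"
    unfolding Od_def
    by (subst prod.atLeastAtMost_rev) (rule prod.cong, auto simp: of_nat_diff)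
  have nz: "(2*of_nat i - 1::rat) \<noteq> 0" if "i \<in> {1..r}" for i
  proof -
    have "(of_nat i::rat) \<ge> 1" using that by simp
    then show ?thesis by linarith
  qed
  have Od0: "Od \<noteq> 0" unfolding Od_def using nz by (simp add: prod_zero_iff)
  have E0: "E \<noteq> 0" unfolding E_def by (simp add: prod_zero_iff)
  have "(\<Prod>k=1..r. (2*of_nat r - 2*of_nat k + 1)/(2*of_nat k) :: rat) = Od / E"
    unfolding prod_dividef rev E_def ..
  moreover have "(\<Prod>i=1..r. 4 * (2*of_nat i - 1)^2 :: rat) = 4^r * Od^2"
    unfolding Od_def by (simp add: prod.distrib power_mult_distrib prod_power_distrib)
  moreover have "(2::rat)^(2*r) = 4^r" by (simp add: power_mult)
  ultimately show ?thesis using Od0 E0 unfolding fact_split Od_def[symmetric] E_def[symmetric]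
    by (simp add: field_simps power2_eq_square)
qed

theorem lemma4p4:
  fixes r :: nat and \<beta> :: rat
  assumes "r \<ge> 1"
  shows "cseq r 1 \<beta> 0 (2*r) =
    1 / (2^(2*r) * fact (2*r)) * (\<Prod>i=1..r. (1 - (2 * of_nat i - 1)^2 * \<beta>))"
proof -
  define K :: rat where "K = 1 / (2^(2*r) * fact (2*r))"
  define lin :: "nat \<Rightarrow> rat poly" where "lin i = [:1 - (2*of_nat i - 1)^2, 4*(2*of_nat i - 1)^2:]" for i
  define q where "q = smult K (\<Prod>i\<in>{1..r}. lin i)"
  define p where "p = cp r (2*r)"
  define D :: "nat \<Rightarrow> rat" where "D i = (1 - (1/(2*of_nat i - 1))^2)/4" for i
  have nz: "(2*of_nat i - 1::rat) \<noteq> 0" if "1 \<le> i" for i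
  proof -
    have "(of_nat i::rat) \<ge> 1" using that by simp
    then show ?thesis by linarith
  qed
  have lin_nz: "lin i \<noteq> 0" and deg_lin: "degree (lin i) = 1" if "1 \<le> i" for i
    using nz[OF that] unfolding lin_def by auto
  have degP: "degree (\<Prod>i\<in>{1..r}. lin i) = r"
  proof -
    have "degree (\<Prod>i\<in>{1..r}. lin i) = (\<Sum>i\<in>{1..r}. degree (lin i))"
      by (rule degree_prod_eq_sum_degree) (simp add: lin_nz)
    also have "\<dots> = (\<Sum>i\<in>{1..r}. 1)" by (rule sum.cong) (simp_all add: deg_lin)
    finally show ?thesis by simp
  qed
  have lcP: "lead_coeff (\<Prod>i\<in>{1..r}. lin i) = (\<Prod>i=1..r. 4 * (2*of_nat i - 1)^2)"
    unfolding lead_coeff_prod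
  proof (rule prod.cong)
    fix i assume "i \<in> {1..r}"
    then show "lead_coeff (lin i) = 4 * (2*of_nat i - 1)^2" using deg_lin[of i] unfolding lin_def by simp
  qed simp
  have "p = q"
  proof (rule poly_eqI_degree_lead_coeff[where n = r and A = "D ` {1..r}"])
    show "coeff p r = coeff q r"
      unfolding p_def q_def coeff_smult cp_coeff_top numeric K_def using degP lcP by simp
    have "inj_on D {1..r}"
    proof (rule inj_onI)
      fix i j assume i: "i \<in> {1..r}" and j: "j \<in> {1..r}" and e: "D i = D j"
      have "(1/(2*of_nat i - 1 :: rat))^2 = (1/(2*of_nat j - 1))^2" using e unfolding D_def by simp
      then have "(2*of_nat i - 1 :: rat)^2 = (2*of_nat j - 1)^2" using nz i j by (simp add: power_one_over)
      moreover have "(2*of_nat i - 1 :: rat) \<ge> 0" "(2*of_nat j - 1 :: rat) \<ge> 0" using i j by auto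
      ultimately have "(2*of_nat i - 1 :: rat) = 2*of_nat j - 1" using power2_eq_iff_nonneg by blast
      then show "i = j" by simp
    qed
    then show "card (D ` {1..r}) \<ge> r" by (simp add: card_image)
    show "degree p \<le> r" unfolding p_def by (rule degree_le) (auto intro: cp_coeff_zero)
    show "degree q \<le> r" unfolding q_def using degP degree_smult_le by (metis)
    fix z assume "z \<in> D ` {1..r}"
    then obtain i where i: "i \<in> {1..r}" and z: "z = D i" by auto
    have "poly p z = 0" unfolding p_def z D_def using i by (intro cp_root) auto
    moreover have "poly q z = 0"
    proof -
      have gen: "1 - t^2 + 4*t^2 * ((1 - (1/t)^2)/4) = 0" if "t \<noteq> 0" for t :: rat
        using that by (simp add: field_simps power2_eq_square)
      have "poly (lin i) (D i) = 0" unfolding lin_def D_def using gen[OF nz[of i]] i by (simp add: mult.commute)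
      then show ?thesis unfolding q_def z poly_smult poly_prod using i by (auto simp: prod_zero_iff)
    qed
    ultimately show "poly p z = poly q z" by simp
  qed
  have "cseq r 1 \<beta> 0 (2*r) = poly p ((1 - \<beta>)/4)"
    unfolding p_def by (rule seq_eq_cp[OF cseq_small(1) cseq_small(2) cseq_short])
  also have "\<dots> = poly q ((1 - \<beta>)/4)" using \<open>p = q\<close> by simp
  also have "\<dots> = K * (\<Prod>i=1..r. (1 - (2 * of_nat i - 1)^2 * \<beta>))"
    unfolding q_def poly_smult poly_prod
    by (intro arg_cong[where f="(*) K"] prod.cong) (simp_all add: lin_def field_simps)
  finally show ?thesis unfolding K_def .
qed

end
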